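(* Let $p\in[0,1]$, $m\ge1$, $n\ge 2$, let $x_1\le\dots\le x_m$ be integers and $y_1\le\dots\le y_n$ be elements of $\mathbb Z':=\mathbb Z+\tfrac12$. Let $\mathbf X=(X_1,\dots,X_m)$ be an $m$-dimensional $p$-simple coalescing random walk on $\mathbb Z$ started at $(x_1,\dots,x_m)$ and $\mathbf Y=(Y_1,\dots,Y_n)$ an $n$-dimensional $(1-p)$-simple coalescing random walk on $\mathbb Z'$ started at $(y_1,\dots,y_n)$. For $1\le i\le m$, $1\le j\le n-1$ put $I^{\rightarrow}_{ij}(t):=1\{X_i(t)\in(y_j,y_{j+1}]\}$ and $I^{\leftarrow}_{ij}(t):=1\{x_i\in(Y_j(t),Y_{j+1}(t)]\}$. Then for every $t\ge0$ the random arrays $(I^{\rightarrow}_{ij}(t))_{i,j}$ and $(I^{\leftarrow}_{ij}(t))_{i,j}$ have the same joint distribution.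
   Context: A $p$-simple random walk on $\mathbb Z$ (resp. on $\mathbb Z'=\mathbb Z+\frac12$) is a continuous-time random walk that jumps at rate $1$, each jump going to the right neighbour with probability $p$ and to the left neighbour with probability $1-p$. An $m$-dimensional $p$-simple coalescing random walk started at ordered points $x_1\le\dots\le x_m$ is the system of $m$ indexed particles in which free particles perform independent $p$-simple random walks; whenever two particles occupy the same site, the particle of higher index becomes attached to the particle of lower index and thereafter moves together with it (particles starting at the same site are attached from time $0$). Notation: $1\{B\}$ is the indicator of $B$. *)

theory Defs
  imports "HOL-Probability.Probability"
begin

text \<open>States of an m-particle system: positions indexed by 1..m (values outside are irrelevant
  and never change). Positions are real so that both Z and Z' = Z + 1/2 can be used.\<close>

text \<open>Particle i is free (the leader of its cluster) iff no particle of lower index sits at its site.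
  In a nearest-neighbour coalescing walk two particles are attached iff they occupy the same site.\<close>
definition cw_leader :: "(nat \<Rightarrow> real) \<Rightarrow> nat \<Rightarrow> bool" where
  "cw_leader x i \<longleftrightarrow> (\<forall>k\<in>{1..<i}. x k \<noteq> x i)"

text \<open>One step of the uniformized chain (uniformization rate m): a uniformly chosen particle i
  rings; if it is free, it jumps right with prob. p and left with prob. 1-p, carrying along all
  particles attached to it (those at the same site); otherwise nothing happens.\<close>
definition cw_step :: "real \<Rightarrow> nat \<Rightarrow> (nat \<Rightarrow> real) \<Rightarrow> (nat \<Rightarrow> real) pmf" where
  "cw_step p m x =
     do { i \<leftarrow> pmf_of_set {1..m};
          b \<leftarrow> bernoulli_pmf p;
          return_pmf (if cw_leader x i
                      then (\<lambda>k. if k \<in> {1..m} \<and> x k = x i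
                                 then x i + (if b then 1 else -1) else x k)
                      else x) }"

text \<open>Law at time t of the m-dimensional p-simple coalescing random walk started at x,
  via uniformization: the number of clock rings up to time t is Poisson(m t).\<close>
definition coal_rw_law :: "real \<Rightarrow> nat \<Rightarrow> (nat \<Rightarrow> real) \<Rightarrow> real \<Rightarrow> (nat \<Rightarrow> real) pmf" where
  "coal_rw_law p m x t =
     (if t = 0 then return_pmf x
      else bind_pmf (poisson_pmf (real m * t))
             (\<lambda>N. ((\<lambda>\<mu>. bind_pmf \<mu> (cw_step p m)) ^^ N) (return_pmf x)))"

definition I_right :: "nat \<Rightarrow> nat \<Rightarrow> (nat \<Rightarrow> real) \<Rightarrow> (nat \<Rightarrow> real) \<Rightarrow> nat \<Rightarrow> nat \<Rightarrow> bool" where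
  "I_right m n y X i j \<longleftrightarrow> i \<in> {1..m} \<and> j \<in> {1..n-1} \<and> y j < X i \<and> X i \<le> y (Suc j)"

definition I_left :: "nat \<Rightarrow> nat \<Rightarrow> (nat \<Rightarrow> real) \<Rightarrow> (nat \<Rightarrow> real) \<Rightarrow> nat \<Rightarrow> nat \<Rightarrow> bool" where
  "I_left m n x Y i j \<longleftrightarrow> i \<in> {1..m} \<and> j \<in> {1..n-1} \<and> Y j < x i \<and> x i \<le> Y (Suc j)"

end

theory Submission
  imports Defs
begin


lemma poisson_thin:
  fixes lam a :: real
  assumes lam: "lam > 0" and a: "0 < a" "a \<le> 1"
  shows "bind_pmf (poisson_pmf lam) (\<lambda>N. binomial_pmf N a) = poisson_pmf (a * lam)"
proof (rule pmf_eqI)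
  fix j :: nat
  define f where "f N = pmf (poisson_pmf lam) N * pmf (binomial_pmf N a) j" for N
  define S where "S = (a*lam)^j / fact j * exp (-(a*lam))"
  have f0: "f N = 0" if "N < j" for N using that a lam by (simp add: f_def)
  have fk: "f (k + j) = ((a*lam)^j / fact j * exp (-lam)) * (((1-a)*lam)^k /\<^sub>R fact k)" for k
  proof -
    have "real ((k+j) choose j) = fact (k+j) / (fact j * fact k)"
      by (simp add: binomial_fact)
    then have eq: "fact (k+j) = fact j * fact k * real ((k+j) choose j)"
      by (simp add: field_simps)
    show ?thesis using a lam unfolding f_def
      apply (simp only: pmf_poisson[OF lam] pmf_binomial[OF less_imp_le[OF a(1)] a(2)] eq power_add power_mult_distrib)
      apply (simp add: field_simps)
      done
  qed
  have "(\<lambda>k. ((a*lam)^j / fact j * exp (-lam)) * (((1-a)*lam)^k /\<^sub>R fact k)) sums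
          (((a*lam)^j / fact j * exp (-lam)) * exp ((1-a)*lam))"
    by (intro sums_mult exp_converges)
  also have "((a*lam)^j / fact j * exp (-lam)) * exp ((1-a)*lam) = S"
    by (simp add: S_def mult_exp_exp[symmetric] algebra_simps flip: exp_add)
  finally have "(\<lambda>k. f (k + j)) sums S" by (simp add: fk)
  hence "f sums (S + (\<Sum>i<j. f i))" by (simp add: sums_iff_shift)
  hence fs: "f sums S" by (simp add: f0)
  have "ennreal (pmf (bind_pmf (poisson_pmf lam) (\<lambda>N. binomial_pmf N a)) j)
      = (\<integral>\<^sup>+N. pmf (binomial_pmf N a) j \<partial>measure_pmf (poisson_pmf lam))"
    by (simp add: ennreal_pmf_bind)
  also have "\<dots> = (\<integral>\<^sup>+N. ennreal (f N) \<partial>count_space UNIV)"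
    by (simp add: nn_integral_measure_pmf f_def ennreal_mult')
  also have "\<dots> = (\<Sum>N. ennreal (f N))"
    by (simp add: nn_integral_count_space_nat)
  also have "\<dots> = ennreal S"
  proof -
    have "0 \<le> S" using a lam by (simp add: S_def)
    moreover have "\<And>N. 0 \<le> f N" by (simp add: f_def)
    ultimately show ?thesis using fs
      by (intro sums_unique[symmetric] sums_ennreal[THEN iffD2]) auto
  qed
  finally have "pmf (bind_pmf (poisson_pmf lam) (\<lambda>N. binomial_pmf N a)) j = S"
    using lam a by (simp add: S_def)
  then show "pmf (bind_pmf (poisson_pmf lam) (\<lambda>N. binomial_pmf N a)) j = pmf (poisson_pmf (a*lam)) j"
    using lam a by (simp add: S_def)
qed



definition itm :: "('a \<Rightarrow> 'a pmf) \<Rightarrow> nat \<Rightarrow> 'a pmf \<Rightarrow> 'a pmf" where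
  "itm K N \<mu> = ((\<lambda>\<mu>. bind_pmf \<mu> K) ^^ N) \<mu>"

lemma itm_0[simp]: "itm K 0 \<mu> = \<mu>" by (simp add: itm_def)
lemma itm_Suc: "itm K (Suc N) \<mu> = bind_pmf (itm K N \<mu>) K" by (simp add: itm_def)
lemma itm_Suc': "itm K (Suc N) \<mu> = itm K N (bind_pmf \<mu> K)"
  by (simp add: itm_def funpow_Suc_right del: funpow.simps)
lemma itm_bind: "itm K N \<mu> = bind_pmf \<mu> (\<lambda>x. itm K N (return_pmf x))"
  by (induction N) (simp_all add: itm_Suc bind_assoc_pmf bind_return_pmf')
lemma itm_Suc_ret: "itm K (Suc N) (return_pmf x) = bind_pmf (K x) (\<lambda>x'. itm K N (return_pmf x'))"
  by (simp add: itm_Suc' bind_return_pmf itm_bind[of K N "K x"])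

lemma itm_set:
  assumes "\<And>x. x \<in> S \<Longrightarrow> set_pmf (K x) \<subseteq> S" "set_pmf \<mu> \<subseteq> S"
  shows "set_pmf (itm K N \<mu>) \<subseteq> S"
  using assms by (induction N) (auto simp: itm_Suc)

definition lazy :: "real \<Rightarrow> ('a \<Rightarrow> 'a pmf) \<Rightarrow> 'a \<Rightarrow> 'a pmf" where
  "lazy a K x = bind_pmf (bernoulli_pmf a) (\<lambda>c. if c then K x else return_pmf x)"

lemma bind_lazy: "bind_pmf \<nu> (lazy a K) = bind_pmf (bernoulli_pmf a) (\<lambda>c. if c then bind_pmf \<nu> K else \<nu>)"
  unfolding lazy_def
  apply (subst bind_commute_pmf)
  apply (intro bind_pmf_cong refl)
  apply (auto simp: bind_return_pmf')
  done

lemma itm_lazy: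
  assumes a: "0 \<le> a" "a \<le> 1"
  shows "itm (lazy a K) N \<mu> = bind_pmf (binomial_pmf N a) (\<lambda>j. itm K j \<mu>)"
proof (induction N)
  case 0
  then show ?case using a by (simp add: binomial_pmf_0 bind_return_pmf)
next
  case (Suc N)
  have "itm (lazy a K) (Suc N) \<mu> = bind_pmf (binomial_pmf N a) (\<lambda>j. bind_pmf (itm K j \<mu>) (lazy a K))"
    by (simp add: itm_Suc Suc bind_assoc_pmf)
  also have "\<dots> = bind_pmf (binomial_pmf N a) (\<lambda>j. bind_pmf (bernoulli_pmf a) (\<lambda>c. itm K ((if c then 1 else 0) + j) \<mu>))"
    by (intro bind_pmf_cong refl) (auto simp: bind_lazy itm_Suc intro!: bind_pmf_cong)
  also have "\<dots> = bind_pmf (binomial_pmf (Suc N) a) (\<lambda>j. itm K j \<mu>)"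
    using a by (simp add: binomial_pmf_Suc bind_assoc_pmf bind_return_pmf bind_commute_pmf[of "binomial_pmf N a"])
  finally show ?case .
qed

lemma coal_law_lazy:
  fixes R :: real
  assumes t: "t > 0" and m: "m \<ge> 1" and R: "R \<ge> real m"
  shows "coal_rw_law p m x t
     = bind_pmf (poisson_pmf (R * t)) (\<lambda>N. itm (lazy (real m / R) (cw_step p m)) N (return_pmf x))"
proof -
  have a: "0 < real m / R" "real m / R \<le> 1" using m R by auto
  have "bind_pmf (poisson_pmf (R * t)) (\<lambda>N. itm (lazy (real m / R) (cw_step p m)) N (return_pmf x))
     = bind_pmf (bind_pmf (poisson_pmf (R * t)) (\<lambda>N. binomial_pmf N (real m / R))) (\<lambda>j. itm (cw_step p m) j (return_pmf x))"
    using a by (simp add: itm_lazy bind_assoc_pmf)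
  also have "\<dots> = bind_pmf (poisson_pmf (real m * t)) (\<lambda>j. itm (cw_step p m) j (return_pmf x))"
    using a t R m by (subst poisson_thin) auto
  finally show ?thesis using t by (simp add: coal_rw_law_def itm_def)
qed



lemma duality_iter:
  fixes KX :: "'a \<Rightarrow> 'a pmf" and KY :: "'b \<Rightarrow> 'b pmf" and F :: "'a \<Rightarrow> 'b \<Rightarrow> 'c"
  assumes gX: "\<And>x. gX x \<Longrightarrow> set_pmf (KX x) \<subseteq> Collect gX"
    and gY: "\<And>y. gY y \<Longrightarrow> set_pmf (KY y) \<subseteq> Collect gY"
    and one: "\<And>x y. gX x \<Longrightarrow> gY y \<Longrightarrow> map_pmf (\<lambda>X. F X y) (KX x) = map_pmf (\<lambda>Y. F x Y) (KY y)"
  shows "gX x \<Longrightarrow> gY y \<Longrightarrow>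
    map_pmf (\<lambda>X. F X y) (itm KX N (return_pmf x)) = map_pmf (\<lambda>Y. F x Y) (itm KY N (return_pmf y))"
proof (induction N arbitrary: x y)
  case 0
  then show ?case by simp
next
  case (Suc N)
  have setY: "set_pmf (itm KY N (return_pmf y)) \<subseteq> Collect gY"
    using Suc.prems by (intro itm_set) (auto dest: gY)
  have "map_pmf (\<lambda>X. F X y) (itm KX (Suc N) (return_pmf x))
      = bind_pmf (KX x) (\<lambda>x'. map_pmf (\<lambda>X. F X y) (itm KX N (return_pmf x')))"
    by (simp add: itm_Suc_ret map_bind_pmf)
  also have "\<dots> = bind_pmf (KX x) (\<lambda>x'. map_pmf (\<lambda>Y. F x' Y) (itm KY N (return_pmf y)))"
    using Suc gX by (intro bind_pmf_cong refl) auto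
  also have "\<dots> = bind_pmf (itm KY N (return_pmf y)) (\<lambda>y'. map_pmf (\<lambda>X. F X y') (KX x))"
    by (simp add: map_pmf_def bind_commute_pmf[of "KX x"])
  also have "\<dots> = bind_pmf (itm KY N (return_pmf y)) (\<lambda>y'. map_pmf (\<lambda>Y. F x Y) (KY y'))"
    using Suc.prems setY by (intro bind_pmf_cong refl one) auto
  also have "\<dots> = map_pmf (\<lambda>Y. F x Y) (itm KY (Suc N) (return_pmf y))"
    by (simp add: itm_Suc map_bind_pmf)
  finally show ?case .
qed



definition mv :: "nat \<Rightarrow> (nat \<Rightarrow> real) \<Rightarrow> real \<Rightarrow> bool \<Rightarrow> nat \<Rightarrow> real" where
  "mv m x c b = (\<lambda>k. if k \<in> {1..m} \<and> x k = c then c + (if b then 1 else -1) else x k)"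

lemma cw_step_mv: "cw_step p m x = bind_pmf (pmf_of_set {1..m}) (\<lambda>i. bind_pmf (bernoulli_pmf p)
   (\<lambda>b. return_pmf (if cw_leader x i then mv m x (x i) b else x)))"
  unfolding cw_step_def mv_def by (simp only: ext)

lemma step_pmf:
  assumes m: "m \<ge> 1" and p: "0 \<le> p" "p \<le> 1"
  shows "pmf (map_pmf G (cw_step p m x)) A * real m =
    (\<Sum>i\<in>{1..m}. if cw_leader x i then p * of_bool (G (mv m x (x i) True) = A)
          + (1 - p) * of_bool (G (mv m x (x i) False) = A) else of_bool (G x = A))"
proof -
  have "pmf (map_pmf G (cw_step p m x)) A = (\<Sum>i\<in>{1..m}. pmf (bind_pmf (bernoulli_pmf p)
     (\<lambda>b. return_pmf (G (if cw_leader x i then mv m x (x i) b else x)))) A) / real m"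
    using m by (simp add: cw_step_mv map_bind_pmf pmf_bind_pmf_of_set map_return_pmf)
  also have "\<dots> = (\<Sum>i\<in>{1..m}. if cw_leader x i then p * of_bool (G (mv m x (x i) True) = A)
          + (1 - p) * of_bool (G (mv m x (x i) False) = A) else of_bool (G x = A)) / real m"
    using p by (intro arg_cong2[where f="(/)"] sum.cong refl) (auto simp: pmf_bind indicator_def)
  finally show ?thesis using m by simp
qed

lemma lazy_pmf:
  assumes a: "0 \<le> a" "a \<le> 1"
  shows "pmf (map_pmf G (lazy a K x)) A = a * pmf (map_pmf G (K x)) A + (1 - a) * of_bool (G x = A)"
  using a by (simp add: lazy_def map_bind_pmf pmf_bind indicator_def map_return_pmf)



lemma hc: assumes "(u::real) \<in> \<int>" "v - 1/2 \<in> \<int>"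
  shows "v \<le> u - 3/2 \<or> v = u - 1/2 \<or> v = u + 1/2 \<or> v \<ge> u + 3/2"
proof -
  obtain a where a: "u = of_int a" using assms(1) Ints_cases by blast
  obtain b where b: "v - 1/2 = of_int b" using assms(2) Ints_cases by blast
  have "b \<le> a - 2 \<or> b = a - 1 \<or> b = a \<or> b \<ge> a + 1" by linarith
  then show ?thesis
  proof (elim disjE)
    assume "b \<le> a - 2" then have "real_of_int b \<le> of_int a - 2" by linarith
    then show ?thesis using a b by linarith
  next
    assume "b = a - 1" then show ?thesis using a b by simp
  next
    assume "b = a" then show ?thesis using a b by simp
  next
    assume "b \<ge> a + 1" then have "real_of_int b \<ge> of_int a + 1" by linarith
    then show ?thesis using a b by linarith
  qed
qed

lemma ii: assumes "(u::real) \<in> \<int>" "w \<in> \<int>"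
  shows "w \<le> u - 1 \<or> w = u \<or> w \<ge> u + 1"
proof -
  obtain a where a: "u = of_int a" using assms(1) Ints_cases by blast
  obtain b where b: "w = of_int b" using assms(2) Ints_cases by blast
  have "b \<le> a - 1 \<or> b = a \<or> b \<ge> a + 1" by linarith
  then show ?thesis
  proof (elim disjE)
    assume "b \<le> a - 1" then have "real_of_int b \<le> of_int a - 1" by linarith
    then show ?thesis using a b by linarith
  next
    assume "b = a" then show ?thesis using a b by simp
  next
    assume "b \<ge> a + 1" then have "real_of_int b \<ge> of_int a + 1" by linarith
    then show ?thesis using a b by linarith
  qed
qed

lemma hcg: fixes u v h :: real assumes hh: "h * 2 = 1" and "u \<in> \<int>" "v - h \<in> \<int>"
  shows "v \<le> u - 3*h \<or> v = u - h \<or> v = u + h \<or> v \<ge> u + 3*h"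
proof -
  have "h = 1/2" using hh by simp
  from hc[OF assms(2), of v] assms(3) show ?thesis unfolding \<open>h = 1/2\<close> by simp
qed

lemma g_pt_match_R:
  fixes c xi v w s h sh :: real assumes hh: "h * 2 = 1" and c: "c \<in> \<int>" and xi: "xi \<in> \<int>" and v: "v - h \<in> \<int>" and w: "w - h \<in> \<int>"
  shows "(v < (if xi = c then c + 1 else xi) \<and> (if xi = c then c + 1 else xi) \<le> w) \<longleftrightarrow>
    ((if v = c + h then c - h else v) < xi \<and> xi \<le> (if w = c + h then c - h else w))"
  using hh hcg[OF hh, OF c v] hcg[OF hh, OF c w] hcg[OF hh, OF xi v] hcg[OF hh, OF xi w] ii[OF c xi]
  by (smt (verit))

lemma g_pt_match_L:
  fixes c xi v w s h sh :: real assumes hh: "h * 2 = 1" and c: "c \<in> \<int>" and xi: "xi \<in> \<int>" and v: "v - h \<in> \<int>" and w: "w - h \<in> \<int>"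
  shows "(v < (if xi = c then c - 1 else xi) \<and> (if xi = c then c - 1 else xi) \<le> w) \<longleftrightarrow>
    ((if v = c - h then c + h else v) < xi \<and> xi \<le> (if w = c - h then c + h else w))"
  using hh hcg[OF hh, OF c v] hcg[OF hh, OF c w] hcg[OF hh, OF xi v] hcg[OF hh, OF xi w] ii[OF c xi]
  by (smt (verit))

lemma g_pt_noX:
  fixes c xi v w s h sh :: real assumes hh: "h * 2 = 1" and c: "c \<in> \<int>" and xi: "xi \<in> \<int>" and v: "v - h \<in> \<int>" and w: "w - h \<in> \<int>"
   and nv: "v \<noteq> c + sh" and nw: "w \<noteq> c + sh" and s: "(s = 1 \<and> sh = h) \<or> (s = -1 \<and> sh = -h)"
  shows "(v < (if xi = c then c + s else xi) \<and> (if xi = c then c + s else xi) \<le> w) \<longleftrightarrow>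
    (v < xi \<and> xi \<le> w)"
  using hh hcg[OF hh, OF c v] hcg[OF hh, OF c w] hcg[OF hh, OF xi v] hcg[OF hh, OF xi w] ii[OF c xi] s nv nw
  by (smt (verit))

lemma g_pt_noY:
  fixes d xi v w s h sh :: real assumes hh: "h * 2 = 1" and d: "d - h \<in> \<int>" and xi: "xi \<in> \<int>" and v: "v - h \<in> \<int>" and w: "w - h \<in> \<int>"
   and nx: "xi \<noteq> d + sh" and s: "(s = 1 \<and> sh = h) \<or> (s = -1 \<and> sh = -h)"
  shows "((if v = d then d + s else v) < xi \<and> xi \<le> (if w = d then d + s else w)) \<longleftrightarrow>
    (v < xi \<and> xi \<le> w)"
  using hh hcg[OF hh, OF xi d] hcg[OF hh, OF xi v] hcg[OF hh, OF xi w] s nx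
  by (smt (verit))

lemma pt_match_R:
  fixes c xi v w s :: real assumes c: "c \<in> \<int>" and xi: "xi \<in> \<int>" and v: "v - 1/2 \<in> \<int>" and w: "w - 1/2 \<in> \<int>"
  shows "(v < (if xi = c then c + 1 else xi) \<and> (if xi = c then c + 1 else xi) \<le> w) \<longleftrightarrow>
    ((if v = c + 1/2 then c - 1/2 else v) < xi \<and> xi \<le> (if w = c + 1/2 then c - 1/2 else w))"
  using g_pt_match_R[where h="1/2"] assms by simp

lemma pt_match_L:
  fixes c xi v w s :: real assumes c: "c \<in> \<int>" and xi: "xi \<in> \<int>" and v: "v - 1/2 \<in> \<int>" and w: "w - 1/2 \<in> \<int>"
  shows "(v < (if xi = c then c - 1 else xi) \<and> (if xi = c then c - 1 else xi) \<le> w) \<longleftrightarrow>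
    ((if v = c - 1/2 then c + 1/2 else v) < xi \<and> xi \<le> (if w = c - 1/2 then c + 1/2 else w))"
  using g_pt_match_L[where h="1/2"] assms by simp

lemma pt_noX:
  fixes c xi v w s :: real assumes c: "c \<in> \<int>" and xi: "xi \<in> \<int>" and v: "v - 1/2 \<in> \<int>" and w: "w - 1/2 \<in> \<int>"
   and nv: "v \<noteq> c + s/2" and nw: "w \<noteq> c + s/2" and s: "s = 1 \<or> s = -1"
  shows "(v < (if xi = c then c + s else xi) \<and> (if xi = c then c + s else xi) \<le> w) \<longleftrightarrow>
    (v < xi \<and> xi \<le> w)"
  by (rule g_pt_noX[where h="1/2" and sh="s/2"]) (use assms in auto)

lemma pt_noY:
  fixes d xi v w s :: real assumes d: "d - 1/2 \<in> \<int>" and xi: "xi \<in> \<int>" and v: "v - 1/2 \<in> \<int>" and w: "w - 1/2 \<in> \<int>"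
   and nx: "xi \<noteq> d + s/2" and s: "s = 1 \<or> s = -1"
  shows "((if v = d then d + s else v) < xi \<and> xi \<le> (if w = d then d + s else w)) \<longleftrightarrow>
    (v < xi \<and> xi \<le> w)"
  by (rule g_pt_noY[where h="1/2" and sh="s/2"]) (use assms in auto)



definition Fa :: "nat \<Rightarrow> nat \<Rightarrow> (nat \<Rightarrow> real) \<Rightarrow> (nat \<Rightarrow> real) \<Rightarrow> nat \<Rightarrow> nat \<Rightarrow> bool" where
  "Fa m n X Y = (\<lambda>i j. i \<in> {1..m} \<and> j \<in> {1..n-1} \<and> Y j < X i \<and> X i \<le> Y (Suc j))"

definition gX :: "nat \<Rightarrow> (nat \<Rightarrow> real) \<Rightarrow> bool" where "gX m x \<longleftrightarrow> (\<forall>i\<in>{1..m}. x i \<in> \<int>)"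
definition gY :: "nat \<Rightarrow> (nat \<Rightarrow> real) \<Rightarrow> bool" where "gY n y \<longleftrightarrow> (\<forall>j\<in>{1..n}. y j - 1/2 \<in> \<int>)"

lemma F_match_R:
  assumes x: "gX m x" and y: "gY n y" and c: "c \<in> \<int>"
  shows "Fa m n (mv m x c True) y = Fa m n x (mv n y (c + 1/2) False)"
proof (intro ext)
  fix i j
  show "Fa m n (mv m x c True) y i j = Fa m n x (mv n y (c + 1/2) False) i j"
  proof (cases "i \<in> {1..m} \<and> j \<in> {1..n-1}")
    case True
    then have ij: "i \<in> {1..m}" "j \<in> {1..n}" "Suc j \<in> {1..n}" by auto
    have ints: "x i \<in> \<int>" "y j - 1/2 \<in> \<int>" "y (Suc j) - 1/2 \<in> \<int>" using x y ij by (auto simp: gX_def gY_def)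
    have L: "Fa m n X Y i j = (Y j < X i \<and> X i \<le> Y (Suc j))" for X Y using True by (simp add: Fa_def)
    have e1: "mv m x c True i = (if x i = c then c + 1 else x i)" using ij by (simp add: mv_def)
    have e2: "mv n y (c + 1/2) False k = (if y k = c + 1/2 then c - 1/2 else y k)" if "k \<in> {1..n}" for k
      using that by (simp add: mv_def)
    from pt_match_R[OF c ints] show ?thesis unfolding L e1 e2[OF ij(2)] e2[OF ij(3)] .
  qed (auto simp: Fa_def)
qed

lemma F_match_L:
  assumes x: "gX m x" and y: "gY n y" and c: "c \<in> \<int>"
  shows "Fa m n (mv m x c False) y = Fa m n x (mv n y (c - 1/2) True)"
proof (intro ext)
  fix i j
  show "Fa m n (mv m x c False) y i j = Fa m n x (mv n y (c - 1/2) True) i j"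
  proof (cases "i \<in> {1..m} \<and> j \<in> {1..n-1}")
    case True
    then have ij: "i \<in> {1..m}" "j \<in> {1..n}" "Suc j \<in> {1..n}" by auto
    have ints: "x i \<in> \<int>" "y j - 1/2 \<in> \<int>" "y (Suc j) - 1/2 \<in> \<int>" using x y ij by (auto simp: gX_def gY_def)
    have L: "Fa m n X Y i j = (Y j < X i \<and> X i \<le> Y (Suc j))" for X Y using True by (simp add: Fa_def)
    have e1: "mv m x c False i = (if x i = c then c - 1 else x i)" using ij by (simp add: mv_def)
    have e2: "mv n y (c - 1/2) True k = (if y k = c - 1/2 then c + 1/2 else y k)" if "k \<in> {1..n}" for k
      using that by (simp add: mv_def)
    from pt_match_L[OF c ints] show ?thesis unfolding L e1 e2[OF ij(2)] e2[OF ij(3)] .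
  qed (auto simp: Fa_def)
qed

lemma F_noX:
  assumes x: "gX m x" and y: "gY n y" and c: "c \<in> \<int>" and s: "s = 1 \<or> s = -1"
    and ns: "c + s/2 \<notin> y ` {1..n}"
  shows "Fa m n (mv m x c (s = 1)) y = Fa m n x y"
proof (intro ext)
  fix i j
  show "Fa m n (mv m x c (s = 1)) y i j = Fa m n x y i j"
  proof (cases "i \<in> {1..m} \<and> j \<in> {1..n-1}")
    case True
    then have ij: "i \<in> {1..m}" "j \<in> {1..n}" "Suc j \<in> {1..n}" by auto
    have "x i \<in> \<int>" "y j - 1/2 \<in> \<int>" "y (Suc j) - 1/2 \<in> \<int>" using x y ij by (auto simp: gX_def gY_def)
    moreover have "y j \<noteq> c + s/2" "y (Suc j) \<noteq> c + s/2" using ns ij by force+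
    ultimately have "(y j < (if x i = c then c + s else x i) \<and> (if x i = c then c + s else x i) \<le> y (Suc j)) \<longleftrightarrow>
        (y j < x i \<and> x i \<le> y (Suc j))" using pt_noX[OF c _ _ _ _ _ s] by blast
    moreover have L: "Fa m n X Y i j = (Y j < X i \<and> X i \<le> Y (Suc j))" for X Y using True by (simp add: Fa_def)
    moreover have e1: "mv m x c (s = 1) i = (if x i = c then c + s else x i)" using ij s by (auto simp: mv_def)
    ultimately show ?thesis by simp
  qed (auto simp: Fa_def)
qed

lemma F_noY:
  assumes x: "gX m x" and y: "gY n y" and d: "d - 1/2 \<in> \<int>" and s: "s = 1 \<or> s = -1"
    and ns: "d + s/2 \<notin> x ` {1..m}"
  shows "Fa m n x (mv n y d (s = 1)) = Fa m n x y"
proof (intro ext)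
  fix i j
  show "Fa m n x (mv n y d (s = 1)) i j = Fa m n x y i j"
  proof (cases "i \<in> {1..m} \<and> j \<in> {1..n-1}")
    case True
    then have ij: "i \<in> {1..m}" "j \<in> {1..n}" "Suc j \<in> {1..n}" by auto
    have "x i \<in> \<int>" "y j - 1/2 \<in> \<int>" "y (Suc j) - 1/2 \<in> \<int>" using x y ij by (auto simp: gX_def gY_def)
    moreover have "x i \<noteq> d + s/2" using ns ij by force
    ultimately have "((if y j = d then d + s else y j) < x i \<and> x i \<le> (if y (Suc j) = d then d + s else y (Suc j))) \<longleftrightarrow>
        (y j < x i \<and> x i \<le> y (Suc j))" using pt_noY[OF d _ _ _ _ s] by blast
    moreover have L: "Fa m n X Y i j = (Y j < X i \<and> X i \<le> Y (Suc j))" for X Y using True by (simp add: Fa_def)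
    moreover have e2: "mv n y d (s = 1) k = (if y k = d then d + s else y k)" if "k \<in> {1..n}" for k
      using that s by (auto simp: mv_def)
    ultimately show ?thesis using ij by simp
  qed (auto simp: Fa_def)
qed



lemma leader_reindex:
  fixes x :: "nat \<Rightarrow> real" and H :: "real \<Rightarrow> real"
  shows "(\<Sum>i\<in>{1..m}. if cw_leader x i then H (x i) else 0) = (\<Sum>c\<in>x ` {1..m}. H c)"
proof -
  define L where "L = {i\<in>{1..m}. cw_leader x i}"
  have "(\<Sum>i\<in>{1..m}. if cw_leader x i then H (x i) else 0) = (\<Sum>i\<in>L. H (x i))"
    unfolding L_def by (rule sum.inter_filter[symmetric]) simp
  also have "inj_on x L"
  proof (rule inj_onI)
    fix i k assume i: "i \<in> L" and k: "k \<in> L" and e: "x i = x k"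
    show "i = k"
    proof (rule ccontr)
      assume "i \<noteq> k"
      then have "i < k \<or> k < i" by linarith
      then show False
      proof
        assume "i < k"
        then have "i \<in> {1..<k}" using i unfolding L_def by auto
        moreover have "cw_leader x k" using k unfolding L_def by auto
        ultimately have "x i \<noteq> x k" unfolding cw_leader_def by blast
        then show False using e by simp
      next
        assume "k < i"
        then have "k \<in> {1..<i}" using k unfolding L_def by auto
        moreover have "cw_leader x i" using i unfolding L_def by auto
        ultimately have "x k \<noteq> x i" unfolding cw_leader_def by blast
        then show False using e by simp
      qed
    qed
  qed
  then have "(\<Sum>i\<in>L. H (x i)) = (\<Sum>c\<in>x ` L. H c)" by (simp add: sum.reindex)
  also have "x ` L = x ` {1..m}"
  proof
    show "x ` L \<subseteq> x ` {1..m}" unfolding L_def by auto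
    show "x ` {1..m} \<subseteq> x ` L"
    proof
      fix c assume "c \<in> x ` {1..m}"
      then obtain i where i: "i \<in> {1..m}" "x i = c" by auto
      define k where "k = (LEAST k. k \<in> {1..m} \<and> x k = c)"
      have k: "k \<in> {1..m} \<and> x k = c" unfolding k_def by (rule LeastI[of _ i]) (use i in blast)
      have "cw_leader x k" unfolding cw_leader_def
      proof
        fix l assume l: "l \<in> {1..<k}"
        show "x l \<noteq> x k"
        proof
          assume "x l = x k"
          then have "l \<in> {1..m} \<and> x l = c" using l k by auto
          then have "k \<le> l" unfolding k_def by (rule Least_le)
          then show False using l by auto
        qed
      qed
      then show "c \<in> x ` L" using k unfolding L_def by (intro image_eqI[of _ _ k]) auto
    qed
  qed
  finally show ?thesis .
qed



lemma shift_sum: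
  fixes f g :: "real \<Rightarrow> real"
  assumes fin: "finite Sx" "finite Sy"
    and f0: "\<And>c. c \<in> Sx \<Longrightarrow> c + s \<notin> Sy \<Longrightarrow> f c = 0"
    and g0: "\<And>d. d \<in> Sy \<Longrightarrow> d - s \<notin> Sx \<Longrightarrow> g d = 0"
    and fg: "\<And>c. c \<in> Sx \<Longrightarrow> c + s \<in> Sy \<Longrightarrow> f c = g (c + s)"
  shows "(\<Sum>c\<in>Sx. f c) = (\<Sum>d\<in>Sy. g d)"
proof -
  have "(\<Sum>c\<in>Sx. f c) = (\<Sum>c\<in>{c\<in>Sx. c + s \<in> Sy}. f c)"
    using fin f0 by (intro sum.mono_neutral_right) auto
  also have "\<dots> = (\<Sum>c\<in>{c\<in>Sx. c + s \<in> Sy}. g (c + s))"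
    using fg by (intro sum.cong) auto
  also have "\<dots> = (\<Sum>d\<in>(\<lambda>c. c + s) ` {c\<in>Sx. c + s \<in> Sy}. g d)"
    by (subst sum.reindex) (auto simp: inj_on_def)
  also have "(\<lambda>c. c + s) ` {c\<in>Sx. c + s \<in> Sy} = {d\<in>Sy. d - s \<in> Sx}"
  proof (intro equalityI subsetI)
    fix d assume "d \<in> (\<lambda>c. c + s) ` {c\<in>Sx. c + s \<in> Sy}"
    then show "d \<in> {d\<in>Sy. d - s \<in> Sx}" by auto
  next
    fix d assume "d \<in> {d\<in>Sy. d - s \<in> Sx}"
    then have "d - s \<in> {c\<in>Sx. c + s \<in> Sy}" by simp
    then have "(d - s) + s \<in> (\<lambda>c. c + s) ` {c\<in>Sx. c + s \<in> Sy}" by (rule imageI)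
    then show "d \<in> (\<lambda>c. c + s) ` {c\<in>Sx. c + s \<in> Sy}" by simp
  qed
  also have "(\<Sum>d\<in>{d\<in>Sy. d - s \<in> Sx}. g d) = (\<Sum>d\<in>Sy. g d)"
    using fin g0 by (intro sum.mono_neutral_left) auto
  finally show ?thesis .
qed



lemma set_cw_step: "m \<ge> 1 \<Longrightarrow> z \<in> set_pmf (cw_step p m x) \<Longrightarrow>
   \<exists>i\<in>{1..m}. \<exists>b. z = (if cw_leader x i then mv m x (x i) b else x)"
proof -
  assume m: "m \<ge> 1" and z: "z \<in> set_pmf (cw_step p m x)"
  then obtain i b where "i \<in> set_pmf (pmf_of_set {1..m})"
     "z = (if cw_leader x i then mv m x (x i) b else x)"
    by (auto simp: cw_step_mv set_bind_pmf)
  moreover have "set_pmf (pmf_of_set {1..m}) = {1..m}" using m by (intro set_pmf_of_set) auto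
  ultimately show ?thesis by blast
qed

lemma step_good_X:
  assumes "m \<ge> 1" "gX m x" shows "set_pmf (cw_step p m x) \<subseteq> Collect (gX m)"
proof
  fix z assume "z \<in> set_pmf (cw_step p m x)"
  then obtain i b where i: "i \<in> {1..m}" and z: "z = (if cw_leader x i then mv m x (x i) b else x)"
    using set_cw_step[OF assms(1)] by blast
  have xi: "x i \<in> \<int>" using assms i by (auto simp: gX_def)
  have "gX m (mv m x (x i) b)" unfolding gX_def mv_def using assms(2) xi
    by (auto simp: gX_def)
  then show "z \<in> Collect (gX m)" using z assms by auto
qed

lemma step_good_Y:
  assumes "n \<ge> 1" "gY n y" shows "set_pmf (cw_step q n y) \<subseteq> Collect (gY n)"
proof
  fix z assume "z \<in> set_pmf (cw_step q n y)"
  then obtain i b where i: "i \<in> {1..n}" and z: "z = (if cw_leader y i then mv n y (y i) b else y)"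
    using set_cw_step[OF assms(1)] by blast
  have yi: "y i - 1/2 \<in> \<int>" using assms i by (auto simp: gY_def)
  have "y i + 1 - 1/2 = (y i - 1/2) + 1" "y i + -1 - 1/2 = (y i - 1/2) - 1" by simp_all
  then have "y i + 1 - 1/2 \<in> \<int>" "y i + -1 - 1/2 \<in> \<int>" using yi by (metis Ints_1 Ints_add Ints_diff)+
  then have "gY n (mv n y (y i) b)" unfolding gY_def mv_def using assms(2)
    by (auto simp: gY_def)
  then show "z \<in> Collect (gY n)" using z assms by auto
qed

lemma lazy_good:
  assumes "\<And>x. g x \<Longrightarrow> set_pmf (K x) \<subseteq> Collect g"
  shows "g x \<Longrightarrow> set_pmf (lazy a K x) \<subseteq> Collect g"
proof -
  assume gx: "g x"
  have "set_pmf (lazy a K x) \<subseteq> set_pmf (K x) \<union> {x}"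
    by (auto simp: lazy_def set_bind_pmf split: if_splits)
  then show ?thesis using assms[OF gx] gx by blast
qed



lemma SX_decomp:
  fixes q :: real and i0 :: real
  shows "(\<Sum>i\<in>{1..m}. if cw_leader x i then q * TT (x i) + (1 - q) * FF (x i) else i0)
       = (\<Sum>c\<in>x ` {1..m}. q * (TT c - i0) + (1 - q) * (FF c - i0)) + real m * i0"
proof -
  have "(\<Sum>i\<in>{1..m}. if cw_leader x i then q * TT (x i) + (1 - q) * FF (x i) else i0)
      = (\<Sum>i\<in>{1..m}. (if cw_leader x i then q * (TT (x i) - i0) + (1 - q) * (FF (x i) - i0) else 0) + i0)"
    by (intro sum.cong refl) (simp add: algebra_simps)
  also have "\<dots> = (\<Sum>i\<in>{1..m}. if cw_leader x i then q * (TT (x i) - i0) + (1 - q) * (FF (x i) - i0) else 0) + real m * i0"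
    by (simp add: sum.distrib)
  also have "(\<Sum>i\<in>{1..m}. if cw_leader x i then q * (TT (x i) - i0) + (1 - q) * (FF (x i) - i0) else 0)
     = (\<Sum>c\<in>x ` {1..m}. q * (TT c - i0) + (1 - q) * (FF c - i0))"
    by (rule leader_reindex)
  finally show ?thesis .
qed

lemma key_identity:
  fixes p :: real and A
  assumes x: "gX m x" and y: "gY n y"
  defines "i0 \<equiv> of_bool (Fa m n x y = A) :: real"
  shows "(\<Sum>c\<in>x ` {1..m}. p * (of_bool (Fa m n (mv m x c True) y = A) - i0)
              + (1 - p) * (of_bool (Fa m n (mv m x c False) y = A) - i0))
       = (\<Sum>d\<in>y ` {1..n}. (1 - p) * (of_bool (Fa m n x (mv n y d True) = A) - i0)
              + (1 - (1 - p)) * (of_bool (Fa m n x (mv n y d False) = A) - i0))"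
proof -
  define Sx where "Sx = x ` {1..m}"
  define Sy where "Sy = y ` {1..n}"
  have fin: "finite Sx" "finite Sy" by (simp_all add: Sx_def Sy_def)
  have cint: "c \<in> \<int>" if "c \<in> Sx" for c using that x by (auto simp: Sx_def gX_def)
  have dint: "d - 1/2 \<in> \<int>" if "d \<in> Sy" for d using that y by (auto simp: Sy_def gY_def)
  have A1: "(\<Sum>c\<in>Sx. p * (of_bool (Fa m n (mv m x c True) y = A) - i0))
       = (\<Sum>d\<in>Sy. p * (of_bool (Fa m n x (mv n y d False) = A) - i0))"
  proof (rule shift_sum[where s="1/2", OF fin])
    fix c assume c: "c \<in> Sx" "c + 1/2 \<notin> Sy"
    have "Fa m n (mv m x c ((1::real) = 1)) y = Fa m n x y"
      by (rule F_noX[OF x y cint[OF c(1)]]) (use c in \<open>auto simp: Sy_def\<close>)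
    then show "p * (of_bool (Fa m n (mv m x c True) y = A) - i0) = 0" by (simp add: i0_def)
  next
    fix d assume d: "d \<in> Sy" "d - 1/2 \<notin> Sx"
    have "Fa m n x (mv n y d ((-1::real) = 1)) = Fa m n x y"
      by (rule F_noY[OF x y dint[OF d(1)]]) (use d in \<open>auto simp: Sx_def\<close>)
    then show "p * (of_bool (Fa m n x (mv n y d False) = A) - i0) = 0" by (simp add: i0_def)
  next
    fix c assume c: "c \<in> Sx" "c + 1/2 \<in> Sy"
    show "p * (of_bool (Fa m n (mv m x c True) y = A) - i0) = p * (of_bool (Fa m n x (mv n y (c + 1/2) False) = A) - i0)"
      using F_match_R[OF x y cint[OF c(1)]] by simp
  qed
  have A2: "(\<Sum>c\<in>Sx. (1 - p) * (of_bool (Fa m n (mv m x c False) y = A) - i0))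
       = (\<Sum>d\<in>Sy. (1 - p) * (of_bool (Fa m n x (mv n y d True) = A) - i0))"
  proof (rule shift_sum[where s="-1/2", OF fin])
    fix c assume c: "c \<in> Sx" "c + -1/2 \<notin> Sy"
    have "Fa m n (mv m x c ((-1::real) = 1)) y = Fa m n x y"
      by (rule F_noX[OF x y cint[OF c(1)]]) (use c in \<open>auto simp: Sy_def\<close>)
    then show "(1 - p) * (of_bool (Fa m n (mv m x c False) y = A) - i0) = 0" by (simp add: i0_def)
  next
    fix d assume d: "d \<in> Sy" "d - -1/2 \<notin> Sx"
    have "Fa m n x (mv n y d ((1::real) = 1)) = Fa m n x y"
      by (rule F_noY[OF x y dint[OF d(1)]]) (use d in \<open>auto simp: Sx_def\<close>)
    then show "(1 - p) * (of_bool (Fa m n x (mv n y d True) = A) - i0) = 0" by (simp add: i0_def)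
  next
    fix c assume c: "c \<in> Sx" "c + -1/2 \<in> Sy"
    have "c + -1/2 = c - 1/2" by simp
    then show "(1 - p) * (of_bool (Fa m n (mv m x c False) y = A) - i0) = (1 - p) * (of_bool (Fa m n x (mv n y (c + -1/2) True) = A) - i0)"
      using F_match_L[OF x y cint[OF c(1)]] by simp
  qed
  have "(\<Sum>c\<in>Sx. p * (of_bool (Fa m n (mv m x c True) y = A) - i0)
              + (1 - p) * (of_bool (Fa m n (mv m x c False) y = A) - i0))
      = (\<Sum>d\<in>Sy. p * (of_bool (Fa m n x (mv n y d False) = A) - i0))
        + (\<Sum>d\<in>Sy. (1 - p) * (of_bool (Fa m n x (mv n y d True) = A) - i0))"
    by (simp only: sum.distrib A1 A2)
  also have "\<dots> = (\<Sum>d\<in>Sy. (1 - p) * (of_bool (Fa m n x (mv n y d True) = A) - i0)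
              + (1 - (1 - p)) * (of_bool (Fa m n x (mv n y d False) = A) - i0))"
    by (simp add: sum.distrib)
  finally show ?thesis unfolding Sx_def Sy_def .
qed



lemma one_step:
  assumes m: "m \<ge> 1" and n: "n \<ge> 1" and p: "0 \<le> p" "p \<le> 1"
    and x: "gX m x" and y: "gY n y"
  shows "map_pmf (\<lambda>X. Fa m n X y) (lazy (real m / (real m + real n)) (cw_step p m) x)
       = map_pmf (\<lambda>Y. Fa m n x Y) (lazy (real n / (real m + real n)) (cw_step (1 - p) n) y)"
proof (rule pmf_eqI)
  fix A
  define i0 where "i0 = (of_bool (Fa m n x y = A) :: real)"
  define PX where "PX = pmf (map_pmf (\<lambda>X. Fa m n X y) (cw_step p m x)) A"
  define PY where "PY = pmf (map_pmf (\<lambda>Y. Fa m n x Y) (cw_step (1 - p) n y)) A"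
  have SX: "PX * real m = (\<Sum>c\<in>x ` {1..m}. p * (of_bool (Fa m n (mv m x c True) y = A) - i0)
              + (1 - p) * (of_bool (Fa m n (mv m x c False) y = A) - i0)) + real m * i0"
    unfolding PX_def i0_def
    by (subst step_pmf[OF m p]) (rule SX_decomp)
  have SY: "PY * real n = (\<Sum>d\<in>y ` {1..n}. (1 - p) * (of_bool (Fa m n x (mv n y d True) = A) - i0)
              + (1 - (1 - p)) * (of_bool (Fa m n x (mv n y d False) = A) - i0)) + real n * i0"
  proof -
    have q: "0 \<le> 1 - p" "1 - p \<le> 1" using p by auto
    show ?thesis unfolding PY_def i0_def
      by (subst step_pmf[OF n q]) (rule SX_decomp)
  qed
  have key: "PX * real m + real n * i0 = PY * real n + real m * i0"
    using SX SY key_identity[OF x y, of p A] unfolding i0_def by simp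
  have pos: "real m + real n > 0" using m by simp
  have a: "0 \<le> real m / (real m + real n)" "real m / (real m + real n) \<le> 1" using pos by auto
  have b: "0 \<le> real n / (real m + real n)" "real n / (real m + real n) \<le> 1" using pos by auto
  have "pmf (map_pmf (\<lambda>X. Fa m n X y) (lazy (real m / (real m + real n)) (cw_step p m) x)) A
      = (PX * real m + real n * i0) / (real m + real n)"
  proof -
    have "1 - real m / (real m + real n) = real n / (real m + real n)" using pos by (simp add: field_simps)
    then show ?thesis unfolding lazy_pmf[OF a] PX_def[symmetric] i0_def[symmetric]
      by (simp add: add_divide_distrib)
  qed
  also have "\<dots> = (PY * real n + real m * i0) / (real m + real n)" by (simp only: key)
  also have "\<dots> = pmf (map_pmf (\<lambda>Y. Fa m n x Y) (lazy (real n / (real m + real n)) (cw_step (1 - p) n) y)) A"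
  proof -
    have "1 - real n / (real m + real n) = real m / (real m + real n)" using pos by (simp add: field_simps)
    then show ?thesis unfolding lazy_pmf[OF b] PY_def[symmetric] i0_def[symmetric]
      by (simp add: add_divide_distrib)
  qed
  finally show "pmf (map_pmf (\<lambda>X. Fa m n X y) (lazy (real m / (real m + real n)) (cw_step p m) x)) A
      = pmf (map_pmf (\<lambda>Y. Fa m n x Y) (lazy (real n / (real m + real n)) (cw_step (1 - p) n) y)) A" .
qed

theorem mainTheorem2:
  fixes p t :: real and m n :: nat and x y :: "nat \<Rightarrow> real"
  assumes "0 \<le> p" "p \<le> 1" "m \<ge> 1" "n \<ge> 2" "t \<ge> 0"
    and "\<forall>i\<in>{1..m}. x i \<in> \<int>"
    and "\<forall>i\<in>{1..<m}. x i \<le> x (Suc i)"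
    and "\<forall>j\<in>{1..n}. y j - 1/2 \<in> \<int>"
    and "\<forall>j\<in>{1..<n}. y j \<le> y (Suc j)"
  shows "map_pmf (\<lambda>X. I_right m n y X) (coal_rw_law p m x t)
       = map_pmf (\<lambda>Y. I_left m n x Y) (coal_rw_law (1 - p) n y t)"
proof -
  have IR: "(\<lambda>X. I_right m n y X) = (\<lambda>X. Fa m n X y)" by (intro ext) (simp add: I_right_def Fa_def)
  have IL: "(\<lambda>Y. I_left m n x Y) = (\<lambda>Y. Fa m n x Y)" by (intro ext) (simp add: I_left_def Fa_def)
  have m: "m \<ge> 1" and n: "n \<ge> 1" using assms by auto
  have gx: "gX m x" using assms(6) by (simp add: gX_def)
  have gy: "gY n y" using assms(8) by (simp add: gY_def)
  show ?thesis
  proof (cases "t = 0")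
    case True
    then show ?thesis unfolding IR IL by (simp add: coal_rw_law_def)
  next
    case False
    then have t: "t > 0" using assms by simp
    define R where "R = real m + real n"
    have RX: "R \<ge> real m" and RY: "R \<ge> real n" by (simp_all add: R_def)
    define KX where "KX = lazy (real m / R) (cw_step p m)"
    define KY where "KY = lazy (real n / R) (cw_step (1 - p) n)"
    have dual: "map_pmf (\<lambda>X. Fa m n X y) (itm KX N (return_pmf x))
        = map_pmf (\<lambda>Y. Fa m n x Y) (itm KY N (return_pmf y))" for N
    proof (rule duality_iter[where gX="gX m" and gY="gY n"])
      show "\<And>x. gX m x \<Longrightarrow> set_pmf (KX x) \<subseteq> Collect (gX m)"
        unfolding KX_def by (rule lazy_good) (rule step_good_X[OF m])
      show "\<And>y. gY n y \<Longrightarrow> set_pmf (KY y) \<subseteq> Collect (gY n)"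
        unfolding KY_def by (rule lazy_good) (rule step_good_Y[OF n])
      show "\<And>x y. gX m x \<Longrightarrow> gY n y \<Longrightarrow> map_pmf (\<lambda>X. Fa m n X y) (KX x) = map_pmf (\<lambda>Y. Fa m n x Y) (KY y)"
        unfolding KX_def KY_def R_def by (rule one_step[OF m n assms(1,2)])
    qed (use gx gy in auto)
    have "map_pmf (\<lambda>X. Fa m n X y) (coal_rw_law p m x t)
        = bind_pmf (poisson_pmf (R * t)) (\<lambda>N. map_pmf (\<lambda>X. Fa m n X y) (itm KX N (return_pmf x)))"
      unfolding coal_law_lazy[OF t m RX] KX_def by (simp add: map_bind_pmf)
    also have "\<dots> = bind_pmf (poisson_pmf (R * t)) (\<lambda>N. map_pmf (\<lambda>Y. Fa m n x Y) (itm KY N (return_pmf y)))"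
      by (simp only: dual)
    also have "\<dots> = map_pmf (\<lambda>Y. Fa m n x Y) (coal_rw_law (1 - p) n y t)"
      unfolding coal_law_lazy[OF t n RY] KY_def by (simp add: map_bind_pmf)
    finally show ?thesis unfolding IR IL .
  qed
qed

end
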